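(* Every bipartite graph is strongly EFX-orientable.
   Context: All graphs are finite and simple. For a graph $G=(V,E)$ and $v\in V$, $E(v)$ is the set of edges incident to $v$. A graphical instance on $G$ assigns to each vertex $v$ a valuation $f_v:2^E\to\mathbb{R}_{\ge 0}$ that is monotone ($A\subseteq B\Rightarrow f_v(A)\le f_v(B)$) and satisfies $f_v(X)=f_v(X\cap E(v))$ for all $X\subseteq E$. An orientation of $G$ chooses for each edge one of its endpoints as its head; vertex $v$ receives the bundle $X_v$ of edges whose head is $v$. The orientation is EFX if for all $u,v\in V$ and every $g\in X_v$, $f_u(X_u)\ge f_u(X_v\setminus\{g\})$. A graph $G$ is strongly EFX-orientable if for every graphical instance on $G$ there exists an EFX orientation. *)

theory Defs
  imports Complex_Main
begin

definition simple_graph :: "'v set \<Rightarrow> 'v set set \<Rightarrow> bool" where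
  "simple_graph V E \<longleftrightarrow> finite V \<and> (\<forall>e\<in>E. e \<subseteq> V \<and> card e = 2)"

definition bipartite :: "'v set \<Rightarrow> 'v set set \<Rightarrow> bool" where
  "bipartite V E \<longleftrightarrow> (\<exists>A B. A \<union> B = V \<and> A \<inter> B = {} \<and>
      (\<forall>e\<in>E. \<exists>a b. a \<in> A \<and> b \<in> B \<and> e = {a, b}))"

definition incident :: "'v set set \<Rightarrow> 'v \<Rightarrow> 'v set set" where
  "incident E v = {e\<in>E. v \<in> e}"

definition graphical_instance :: "'v set \<Rightarrow> 'v set set \<Rightarrow> ('v \<Rightarrow> 'v set set \<Rightarrow> real) \<Rightarrow> bool" where
  "graphical_instance V E f \<longleftrightarrow>
     (\<forall>v\<in>V. (\<forall>X. X \<subseteq> E \<longrightarrow> f v X \<ge> 0)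
          \<and> (\<forall>X Y. X \<subseteq> Y \<and> Y \<subseteq> E \<longrightarrow> f v X \<le> f v Y)
          \<and> (\<forall>X. X \<subseteq> E \<longrightarrow> f v X = f v (X \<inter> incident E v)))"

definition orientation :: "'v set set \<Rightarrow> ('v set \<Rightarrow> 'v) \<Rightarrow> bool" where
  "orientation E h \<longleftrightarrow> (\<forall>e\<in>E. h e \<in> e)"

definition bundle_of :: "'v set set \<Rightarrow> ('v set \<Rightarrow> 'v) \<Rightarrow> 'v \<Rightarrow> 'v set set" where
  "bundle_of E h v = {e\<in>E. h e = v}"

definition EFX_orientation :: "'v set \<Rightarrow> 'v set set \<Rightarrow> ('v \<Rightarrow> 'v set set \<Rightarrow> real) \<Rightarrow> ('v set \<Rightarrow> 'v) \<Rightarrow> bool" where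
  "EFX_orientation V E f h \<longleftrightarrow> orientation E h \<and>
     (\<forall>u\<in>V. \<forall>v\<in>V. \<forall>g\<in>bundle_of E h v. f u (bundle_of E h u) \<ge> f u (bundle_of E h v - {g}))"

definition strongly_EFX_orientable :: "'v set \<Rightarrow> 'v set set \<Rightarrow> bool" where
  "strongly_EFX_orientable V E \<longleftrightarrow>
     (\<forall>f. graphical_instance V E f \<longrightarrow> (\<exists>h. EFX_orientation V E f h))"

end

theory Submission
  imports Defs
begin

lemma fin_max:
  fixes g :: "'a \<Rightarrow> real"
  assumes "finite S" "S \<noteq> {}"
  shows "\<exists>x\<in>S. \<forall>y\<in>S. g y \<le> g x"
proof -
  have "Max (g ` S) \<in> g ` S" using assms by simp
  then obtain x where x: "x \<in> S" "g x = Max (g ` S)" by auto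
  have "\<forall>y\<in>S. g y \<le> g x" using x assms by simp
  with x show ?thesis by blast
qed

theorem mainTheorem6:
  fixes V :: "'v set" and E :: "'v set set"
  assumes "simple_graph V E" and "bipartite V E"
  shows "strongly_EFX_orientable V E"
  unfolding strongly_EFX_orientable_def
proof (intro allI impI)
  fix f assume gi: "graphical_instance V E f"
  obtain A B where AB: "A \<union> B = V" "A \<inter> B = {}"
    and edg: "\<forall>e\<in>E. \<exists>a b. a \<in> A \<and> b \<in> B \<and> e = {a, b}"
    using assms(2) unfolding bipartite_def by blast
  have finV: "finite V" and EV: "\<forall>e\<in>E. e \<subseteq> V" using assms(1) unfolding simple_graph_def by auto
  have finE: "finite E" using finite_Pow_iff[of V] finV EV
    by (meson PowI finite_subset subsetI)
  have mono: "\<And>u X Y. u \<in> V \<Longrightarrow> X \<subseteq> Y \<Longrightarrow> Y \<subseteq> E \<Longrightarrow> f u X \<le> f u Y"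
    using gi unfolding graphical_instance_def by blast
  have loc: "\<And>u X. u \<in> V \<Longrightarrow> X \<subseteq> E \<Longrightarrow> f u X = f u (X \<inter> incident E u)"
    using gi unfolding graphical_instance_def by blast
  define best where "best b = (SOME e. e \<in> incident E b \<and> (\<forall>e'\<in>incident E b. f b {e'} \<le> f b {e}))" for b
  have best: "best b \<in> incident E b \<and> (\<forall>e'\<in>incident E b. f b {e'} \<le> f b {best b})"
    if "incident E b \<noteq> {}" for b
  proof -
    have "finite (incident E b)" using finE unfolding incident_def by simp
    from fin_max[OF this that, of "\<lambda>e. f b {e}"]
    have "\<exists>e. e \<in> incident E b \<and> (\<forall>e'\<in>incident E b. f b {e'} \<le> f b {e})" by blast
    from someI_ex[OF this] show ?thesis unfolding best_def by blast
  qed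
  define bp where "bp e = (SOME b. b \<in> B \<and> b \<in> e)" for e :: "'v set"
  define ap where "ap e = (SOME a. a \<in> A \<and> a \<in> e)" for e :: "'v set"
  have bpap: "bp {a, b} = b \<and> ap {a, b} = a" if "a \<in> A" "b \<in> B" for a b
  proof -
    have "a \<notin> B" "b \<notin> A" using that AB(2) by auto
    then show ?thesis unfolding bp_def ap_def using that
      by (auto intro!: some_equality)
  qed
  define h where "h e = (if best (bp e) = e then bp e else ap e)" for e
  have L1: "bundle_of E h b \<subseteq> {best b}" if "b \<in> B" for b
  proof
    fix e assume "e \<in> bundle_of E h b"
    then have e: "e \<in> E" "h e = b" unfolding bundle_of_def by auto
    then obtain x y where xy: "x \<in> A" "y \<in> B" "e = {x, y}" using edg by blast
    show "e \<in> {best b}"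
    proof (cases "best (bp e) = e")
      case True
      then show ?thesis using e unfolding h_def by simp
    next
      case False
      then have "h e = x" using bpap[OF xy(1,2)] xy(3) unfolding h_def by simp
      then show ?thesis using e xy that AB(2) by auto
    qed
  qed
  have L2: "best b \<in> bundle_of E h b" if "b \<in> B" "incident E b \<noteq> {}" for b
  proof -
    have bi: "best b \<in> E" "b \<in> best b" using best[OF that(2)] unfolding incident_def by auto
    then obtain x y where xy: "x \<in> A" "y \<in> B" "best b = {x, y}" using edg by blast
    have "y = b" using xy bi(2) that(1) AB(2) by auto
    then have "bp (best b) = b" using bpap[OF xy(1,2)] xy(3) by simp
    then show ?thesis using bi unfolding bundle_of_def h_def by simp
  qed
  have L3: "f u {e} \<le> f u {best u}" if "e \<in> E" "u \<in> e" for u e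
  proof -
    have "e \<in> incident E u" using that unfolding incident_def by simp
    then show ?thesis using best[of u] by blast
  qed
  show "\<exists>h. EFX_orientation V E f h"
  proof (intro exI[of _ h])
    have ori: "orientation E h"
      unfolding orientation_def
    proof
      fix e assume "e \<in> E"
      then obtain x y where xy: "x \<in> A" "y \<in> B" "e = {x, y}" using edg by blast
      then show "h e \<in> e" using bpap[OF xy(1,2)] unfolding h_def by auto
    qed
    have bE: "bundle_of E h w \<subseteq> E" for w unfolding bundle_of_def by auto
    have "f u (bundle_of E h v - {g}) \<le> f u (bundle_of E h u)"
      if uv: "u \<in> V" "v \<in> V" and g: "g \<in> bundle_of E h v" for u v g
    proof -
      let ?X = "bundle_of E h v - {g}"
      let ?Y = "?X \<inter> incident E u"
      have XE: "?X \<subseteq> E" using bE by blast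
      have fX: "f u ?X = f u ?Y" using loc[OF uv(1) XE] .
      have YE: "?Y \<subseteq> E" using XE by blast
      show ?thesis
      proof (cases "v \<in> B")
        case True
        then have "?X = {}" using L1[OF True] g by auto
        moreover have "f u {} \<le> f u (bundle_of E h u)" using mono[OF uv(1) _ bE] by blast
        ultimately show ?thesis by (metis (no_types, lifting))
      next
        case vA: False
        then have vA: "v \<in> A" using uv AB by auto
        show ?thesis
        proof (cases "?Y \<subseteq> bundle_of E h u")
          case True
          then show ?thesis using fX mono[OF uv(1) True bE] by simp
        next
          case False
          then obtain e where e: "e \<in> ?Y" "e \<notin> bundle_of E h u" by blast
          then have eE: "e \<in> E" "h e = v" "u \<in> e" "v \<in> e" using ori
            unfolding bundle_of_def incident_def orientation_def by auto
          obtain x y where xy: "x \<in> A" "y \<in> B" "e = {x, y}" using edg eE(1) by blast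
          have uvne: "u \<noteq> v" using e eE unfolding bundle_of_def by auto
          have xv: "x = v" using xy eE(4) vA AB(2) by auto
          have yu: "y = u" using xy eE(3) uvne xv by auto
          have Ysub: "?Y \<subseteq> {e}"
          proof
            fix e' assume e': "e' \<in> ?Y"
            then have e'E: "e' \<in> E" "h e' = v" "u \<in> e'" "v \<in> e'" using ori
              unfolding bundle_of_def incident_def orientation_def by auto
            obtain x' y' where xy': "x' \<in> A" "y' \<in> B" "e' = {x', y'}" using edg e'E(1) by blast
            have "x' = v" using xy' e'E(4) vA AB(2) by auto
            moreover have "y' = u" using xy' e'E(3) uvne \<open>x' = v\<close> by auto
            ultimately show "e' \<in> {e}" using xy' xy xv yu by auto
          qed
          have uB: "u \<in> B" using yu xy by simp
          have inc: "incident E u \<noteq> {}" using eE unfolding incident_def by auto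
          have "f u ?Y \<le> f u {e}" using mono[OF uv(1) Ysub] eE by simp
          also have "\<dots> \<le> f u {best u}" using L3 eE by simp
          also have "\<dots> \<le> f u (bundle_of E h u)"
            using mono[OF uv(1) _ bE] L2[OF uB inc] by simp
          finally show ?thesis using fX by simp
        qed
      qed
    qed
    then show "EFX_orientation V E f h" unfolding EFX_orientation_def using ori by auto
  qed
qed

end
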